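(* Let $p$ be an odd prime and $m\ge 1$, and let $U=UT(p+1,p,m)$. (1) For $A=(a_{ij})\in U$ and $C=A^p$, the entry $c_{1,p+1}$ equals the $p$-linear map $(v_1,\dots,v_p)\mapsto a_{12}(v_1)a_{23}(v_2)\cdots a_{p,p+1}(v_p)$, and all other entries of $C$ coincide with those of the identity matrix. (2) The subgroup $U^p$ of $U$ generated by all $p$-th powers of elements of $U$ is a nontrivial central subgroup of $U$ of exponent $p$. (3) If $p\ge 3$ and $m\ge 4$, then $U^p$ contains a nontrivial cyclic subgroup $\langle g\rangle$ such that no nontrivial element of $\langle g\rangle$ can be written in $U$ as a product $A_1^p A_2^p\cdots A_m^p$ with $A_1,\dots,A_m\in U$.
   Context: Fix an odd prime $p$, positive integers $\ell,m$, and $m$-dimensional vector spaces $V_1,\dots,V_{\ell-1}$ over the field $\mathbb{F}_p$. $UT(\ell,p,m)$ is the set of $\ell\times\ell$ upper unitriangular matrices $A=(a_{ij})$ with $a_{ii}=1$, $a_{ij}=0$ for $i>j$, and where for $j-i=t>0$ the entry $a_{ij}$ is a $t$-linear map $V_i\times\cdots\times V_{j-1}\to\mathbb{F}_p$. The product of entries $a_{ij}$ and $b_{jk}$ ($i\le j\le k$) is the $(k-i)$-linear map $V_i\times\cdots\times V_{k-1}\to\mathbb{F}_p$, $(v_i,\dots,v_{k-1})\mapsto a_{ij}(v_i,\dots,v_{j-1})\,b_{jk}(v_j,\dots,v_{k-1})$ (with diagonal entries acting as scalars $1$), and matrix multiplication $(AB)_{ik}=\sum_j a_{ij}b_{jk}$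 makes $UT(\ell,p,m)$ a finite $p$-group. *)

theory Defs
  imports "HOL-Computational_Algebra.Primes" "HOL-Algebra.Group" "HOL-Algebra.Generated_Groups"
begin

text \<open>Vectors: a family v of vectors, v k being the vector in V_k (k = 1..l-1),
  with coordinates v k c for c < m (V_k = F^m with F the field 'a).
  An entry a_ij is a function of such a family which depends only on
  v_i, ..., v_(j-1) (their first m coordinates) and is linear in each of them.
  The product of entries a_ij b_jk is then the pointwise product of functions.\<close>

type_synonym 'a vfam = "nat \<Rightarrow> nat \<Rightarrow> 'a"
type_synonym 'a entry = "'a vfam \<Rightarrow> 'a"
type_synonym 'a utmat = "nat \<Rightarrow> nat \<Rightarrow> 'a entry"

definition multilinear_on :: "nat \<Rightarrow> nat \<Rightarrow> nat \<Rightarrow> ('a::field) entry \<Rightarrow> bool" where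
  "multilinear_on m i j f \<longleftrightarrow>
     (\<forall>v w. (\<forall>k\<in>{i..<j}. \<forall>c<m. v k c = w k c) \<longrightarrow> f v = f w) \<and>
     (\<forall>k\<in>{i..<j}. \<forall>v x y. f (v(k := (\<lambda>c. x c + y c))) = f (v(k := x)) + f (v(k := y))) \<and>
     (\<forall>k\<in>{i..<j}. \<forall>v a x. f (v(k := (\<lambda>c. a * x c))) = a * f (v(k := x)))"

definition UT_carrier :: "nat \<Rightarrow> nat \<Rightarrow> ('a::field) utmat set" where
  "UT_carrier l m = {A.
     (\<forall>i j. \<not> (i \<in> {1..l} \<and> j \<in> {1..l}) \<longrightarrow> A i j = (\<lambda>_. 0)) \<and>
     (\<forall>i\<in>{1..l}. A i i = (\<lambda>_. 1)) \<and>
     (\<forall>i\<in>{1..l}. \<forall>j\<in>{1..l}. j < i \<longrightarrow> A i j = (\<lambda>_. 0)) \<and>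
     (\<forall>i\<in>{1..l}. \<forall>j\<in>{1..l}. i < j \<longrightarrow> multilinear_on m i j (A i j))}"

definition UT_mult :: "nat \<Rightarrow> ('a::field) utmat \<Rightarrow> 'a utmat \<Rightarrow> 'a utmat" where
  "UT_mult l A B = (\<lambda>i k v. \<Sum>j\<in>{1..l}. A i j v * B j k v)"

definition UT_one :: "nat \<Rightarrow> ('a::field) utmat" where
  "UT_one l = (\<lambda>i j. if i = j \<and> i \<in> {1..l} then (\<lambda>_. 1) else (\<lambda>_. 0))"

text \<open>UT(l,p,m) where p = CARD('a) is the order of the (prime) field 'a.\<close>
definition UT :: "nat \<Rightarrow> nat \<Rightarrow> ('a::field) utmat monoid" where
  "UT l m = \<lparr>carrier = UT_carrier l m, mult = UT_mult l, one = UT_one l\<rparr>"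

definition pth_power_subgroup :: "('b, 'c) monoid_scheme \<Rightarrow> nat \<Rightarrow> 'b set" where
  "pth_power_subgroup G p = generate G {x [^]\<^bsub>G\<^esub> p | x. x \<in> carrier G}"

end

theory Submission imports Defs "HOL-Number_Theory.Residues" begin

definition mm :: "nat \<Rightarrow> (nat\<Rightarrow>nat\<Rightarrow>'a::comm_ring_1) \<Rightarrow> (nat\<Rightarrow>nat\<Rightarrow>'a) \<Rightarrow> nat\<Rightarrow>nat\<Rightarrow>'a" where
  "mm l X Y = (\<lambda>i k. \<Sum>j\<in>{1..l}. X i j * Y j k)"

fun mpw :: "nat \<Rightarrow> (nat\<Rightarrow>nat\<Rightarrow>'a::comm_ring_1) \<Rightarrow> nat \<Rightarrow> nat\<Rightarrow>nat\<Rightarrow>'a" where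
  "mpw l M 0 = (\<lambda>i k. if i = k then 1 else 0)"
| "mpw l M (Suc n) = mm l (mpw l M n) M"

lemma pascal_sum:
  fixes P :: "nat \<Rightarrow> 'a::comm_ring_1"
  shows "(\<Sum>t\<le>n. of_nat (n choose t) * P t) + (\<Sum>t\<le>n. of_nat (n choose t) * P (Suc t))
         = (\<Sum>t\<le>Suc n. of_nat (Suc n choose t) * P t)"
proof -
  have 1: "(\<Sum>t\<le>Suc n. of_nat (Suc n choose t) * P t)
        = P 0 + (\<Sum>t\<le>n. (of_nat (n choose t) + of_nat (n choose Suc t)) * P (Suc t))"
    by (subst sum.atMost_Suc_shift) simp
  have 2: "P 0 + (\<Sum>t\<le>n. of_nat (n choose Suc t) * P (Suc t)) = (\<Sum>t\<le>Suc n. of_nat (n choose t) * P t)"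
    by (subst sum.atMost_Suc_shift) simp
  have 3: "(\<Sum>t\<le>Suc n. of_nat (n choose t) * P t) = (\<Sum>t\<le>n. of_nat (n choose t) * P t)"
    by (simp add: binomial_eq_0)
  show ?thesis unfolding 1 using 2 3 by (simp add: sum.distrib algebra_simps)
qed

lemma mpw_binom:
  fixes M N :: "nat\<Rightarrow>nat\<Rightarrow>'a::comm_ring_1"
  assumes MN: "\<And>j k. j \<in> {1..l} \<Longrightarrow> k \<in> {1..l} \<Longrightarrow> M j k = (if j = k then 1 else 0) + N j k"
  shows "i \<in> {1..l} \<Longrightarrow> k \<in> {1..l} \<Longrightarrow>
     mpw l M n i k = (\<Sum>t\<le>n. of_nat (n choose t) * mpw l N t i k)"
proof (induction n arbitrary: k)
  case 0
  then show ?case by simp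
next
  case (Suc n)
  have "mpw l M (Suc n) i k = (\<Sum>j\<in>{1..l}. mpw l M n i j * M j k)"
    by (simp add: mm_def)
  also have "\<dots> = (\<Sum>j\<in>{1..l}. mpw l M n i j * (if j = k then 1 else 0))
                 + (\<Sum>j\<in>{1..l}. mpw l M n i j * N j k)"
    using Suc.prems by (simp add: MN sum.distrib distrib_left)
  also have "(\<Sum>j\<in>{1..l}. mpw l M n i j * (if j = k then 1 else 0)) = mpw l M n i k"
    using Suc.prems by (simp add: if_distrib cong: if_cong)
  also have "(\<Sum>j\<in>{1..l}. mpw l M n i j * N j k)
       = (\<Sum>j\<in>{1..l}. (\<Sum>t\<le>n. of_nat (n choose t) * mpw l N t i j) * N j k)"
    using Suc.IH Suc.prems by (intro sum.cong) auto
  also have "\<dots> = (\<Sum>t\<le>n. of_nat (n choose t) * mpw l N (Suc t) i k)"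
    by (simp add: mm_def sum_distrib_left sum_distrib_right mult.assoc) (rule sum.swap)
  finally have X: "mpw l M (Suc n) i k = mpw l M n i k + (\<Sum>t\<le>n. of_nat (n choose t) * mpw l N (Suc t) i k)" .
  show ?case unfolding X Suc.IH[OF Suc.prems] by (rule pascal_sum)
qed

lemma npw_zero:
  fixes N :: "nat\<Rightarrow>nat\<Rightarrow>'a::comm_ring_1"
  assumes Nz: "\<And>j k. j \<in> {1..l} \<Longrightarrow> k \<in> {1..l} \<Longrightarrow> k \<le> j \<Longrightarrow> N j k = 0"
  shows "i \<in> {1..l} \<Longrightarrow> k \<in> {1..l} \<Longrightarrow> k < i + t \<Longrightarrow> mpw l N t i k = 0"
proof (induction t arbitrary: k)
  case 0
  then show ?case by simp
next
  case (Suc t)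
  have "mpw l N (Suc t) i k = (\<Sum>j\<in>{1..l}. mpw l N t i j * N j k)" by (simp add: mm_def)
  also have "\<dots> = 0"
  proof (rule sum.neutral, intro ballI)
    fix j assume j: "j \<in> {1..l}"
    show "mpw l N t i j * N j k = 0"
    proof (cases "j < i + t")
      case True then show ?thesis using Suc.IH[OF Suc.prems(1) j] by simp
    next
      case False then show ?thesis using Nz[OF j Suc.prems(2)] Suc.prems by simp
    qed
  qed
  finally show ?case .
qed

lemma npw_diag:
  fixes N :: "nat\<Rightarrow>nat\<Rightarrow>'a::comm_ring_1"
  assumes Nz: "\<And>j k. j \<in> {1..l} \<Longrightarrow> k \<in> {1..l} \<Longrightarrow> k \<le> j \<Longrightarrow> N j k = 0"
  shows "1 \<le> i \<Longrightarrow> i + t \<le> l \<Longrightarrow> mpw l N t i (i + t) = (\<Prod>s\<in>{i..<i+t}. N s (Suc s))"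
proof (induction t)
  case 0
  then show ?case by simp
next
  case (Suc t)
  have "mpw l N (Suc t) i (i + Suc t) = (\<Sum>j\<in>{1..l}. mpw l N t i j * N j (i + Suc t))" by (simp add: mm_def)
  also have "\<dots> = mpw l N t i (i + t) * N (i + t) (i + Suc t)"
  proof -
    have "(\<Sum>j\<in>{1..l}. mpw l N t i j * N j (i + Suc t)) = mpw l N t i (i + t) * N (i + t) (i + Suc t)
       + (\<Sum>j\<in>{1..l} - {i+t}. mpw l N t i j * N j (i + Suc t))"
      using Suc.prems by (intro sum.remove) auto
    also have "(\<Sum>j\<in>{1..l} - {i+t}. mpw l N t i j * N j (i + Suc t)) = 0"
    proof (rule sum.neutral, intro ballI)
      fix j assume j: "j \<in> {1..l} - {i+t}"
      show "mpw l N t i j * N j (i + Suc t) = 0"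
      proof (cases "j < i + t")
        case True then show ?thesis using npw_zero[where N=N and l=l and i=i and k=j and t=t, OF Nz] Suc.prems j by simp
      next
        case False then show ?thesis using Nz[of j "i + Suc t"] Suc.prems j by simp
      qed
    qed
    finally show ?thesis by simp
  qed
  also have "\<dots> = (\<Prod>s\<in>{i..<i+Suc t}. N s (Suc s))"
    using Suc by (simp add: prod.atLeastLessThan_Suc)
  finally show ?case .
qed

lemma mpw_p:
  fixes M :: "nat\<Rightarrow>nat\<Rightarrow>'a::comm_ring_1"
  assumes p: "prime p" and char: "of_nat p = (0::'a)" and l: "l = p + 1"
    and Md: "\<And>j. j \<in> {1..l} \<Longrightarrow> M j j = 1"
    and Ml: "\<And>j k. j \<in> {1..l} \<Longrightarrow> k \<in> {1..l} \<Longrightarrow> k < j \<Longrightarrow> M j k = 0"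
    and i: "i \<in> {1..l}" and k: "k \<in> {1..l}"
  shows "mpw l M p i k = (if i = k then 1 else 0) + (if i = 1 \<and> k = l then (\<Prod>s\<in>{1..p}. M s (Suc s)) else 0)"
proof -
  define N where "N = (\<lambda>j k. if j = k then 0 else M j k)"
  have MN: "\<And>j k. j \<in> {1..l} \<Longrightarrow> k \<in> {1..l} \<Longrightarrow> M j k = (if j = k then 1 else 0) + N j k"
    by (simp add: N_def Md)
  have Nz: "\<And>j k. j \<in> {1..l} \<Longrightarrow> k \<in> {1..l} \<Longrightarrow> k \<le> j \<Longrightarrow> N j k = 0"
    using Ml by (auto simp: N_def)
  have p1: "p \<ge> 2" using p by (simp add: prime_ge_2_nat)
  have "mpw l M p i k = (\<Sum>t\<le>p. of_nat (p choose t) * mpw l N t i k)"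
    by (rule mpw_binom[OF MN i k])
  also have "\<dots> = (\<Sum>t\<in>{0,p}. of_nat (p choose t) * mpw l N t i k)"
  proof (rule sum.mono_neutral_right)
    show "\<forall>t\<in>{..p} - {0, p}. of_nat (p choose t) * mpw l N t i k = 0"
    proof
      fix t assume t: "t \<in> {..p} - {0, p}"
      have "p dvd (p choose t)" using t p by (intro dvd_choose_prime) auto
      then obtain q where "p choose t = p * q" by blast
      then show "of_nat (p choose t) * mpw l N t i k = 0" by (simp add: char)
    qed
  qed auto
  also have "\<dots> = (if i = k then 1 else 0) + mpw l N p i k"
    using p1 by simp
  also have "mpw l N p i k = (if i = 1 \<and> k = l then (\<Prod>s\<in>{1..p}. M s (Suc s)) else 0)"
  proof (cases "i = 1 \<and> k = l")
    case True
    then have "mpw l N p i k = (\<Prod>s\<in>{1..<1+p}. N s (Suc s))"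
      using npw_diag[where N=N and l=l and i=1 and t=p, OF Nz] l by simp
    also have "\<dots> = (\<Prod>s\<in>{1..p}. M s (Suc s))"
      by (intro prod.cong) (auto simp: N_def)
    finally show ?thesis using True by simp
  next
    case False
    then have "k < i + p" using i k l by auto
    then show ?thesis using npw_zero[where N=N and l=l and i=i and k=k and t=p, OF Nz] i k False by auto
  qed
  finally show ?thesis .
qed

definition Emat :: "nat \<Rightarrow> ('a::field) entry \<Rightarrow> 'a utmat" where
  "Emat l f = (\<lambda>i j. if i = 1 \<and> j = l then f else UT_one l i j)"

lemma UT_simps [simp]:
  "carrier (UT l m) = UT_carrier l m" "mult (UT l m) = UT_mult l" "one (UT l m) = UT_one l"
  by (simp_all add: UT_def)

lemma carrierD:
  assumes "A \<in> UT_carrier l m"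
  shows "\<And>i j. i \<notin> {1..l} \<or> j \<notin> {1..l} \<Longrightarrow> A i j = (\<lambda>_. 0)"
    "\<And>i. i \<in> {1..l} \<Longrightarrow> A i i = (\<lambda>_. 1)"
    "\<And>i j. i \<in> {1..l} \<Longrightarrow> j \<in> {1..l} \<Longrightarrow> j < i \<Longrightarrow> A i j = (\<lambda>_. 0)"
    "\<And>i j. i \<in> {1..l} \<Longrightarrow> j \<in> {1..l} \<Longrightarrow> i < j \<Longrightarrow> multilinear_on m i j (A i j)"
  using assms unfolding UT_carrier_def by blast+

lemma UT_pow_out:
  assumes A: "A \<in> UT_carrier l m" and ik: "i \<notin> {1..l} \<or> k \<notin> {1..l}"
  shows "(A [^]\<^bsub>UT l m\<^esub> (n::nat)) i k = (\<lambda>_. 0)"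
  using ik
proof (induction n arbitrary: k)
  case 0
  then show ?case by (auto simp: UT_one_def)
next
  case (Suc n)
  show ?case
  proof (cases "k \<in> {1..l}")
    case True
    then have "i \<notin> {1..l}" using Suc.prems by auto
    then show ?thesis using Suc.IH by (auto simp: UT_mult_def)
  next
    case False
    then show ?thesis using carrierD(1)[OF A] by (auto simp: UT_mult_def)
  qed
qed

lemma UT_pow_in:
  assumes A: "A \<in> UT_carrier l m" and i: "i \<in> {1..l}"
  shows "k \<in> {1..l} \<Longrightarrow> (A [^]\<^bsub>UT l m\<^esub> (n::nat)) i k v = mpw l (\<lambda>i j. A i j v) n i k"
proof (induction n arbitrary: k)
  case 0
  then show ?case using i by (auto simp: UT_one_def)
next
  case (Suc n)
  show ?case using Suc.IH by (auto simp: UT_mult_def mm_def intro!: sum.cong)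
qed

lemma char_p:
  assumes "p = card (UNIV :: 'a::{field,finite} set)" "prime p"
  shows "of_nat p = (0::'a)"
proof -
  have "CHAR('a) dvd p" using assms CHAR_dvd_CARD by simp
  then have "CHAR('a) = p" using assms(2) CHAR_not_1 by (metis One_nat_def prime_nat_iff)
  then show ?thesis by (metis of_nat_CHAR)
qed

lemma part1:
  fixes A :: "('a::field) utmat"
  assumes p: "prime p" and char: "of_nat p = (0::'a)" and A: "A \<in> UT_carrier (p+1) m"
  shows "A [^]\<^bsub>UT (p+1) m\<^esub> p = Emat (p+1) (\<lambda>v. \<Prod>k\<in>{1..p}. A k (k+1) v)"
proof (intro ext)
  fix i k v
  show "(A [^]\<^bsub>UT (p+1) m\<^esub> p) i k v = Emat (p+1) (\<lambda>v. \<Prod>k\<in>{1..p}. A k (k+1) v) i k v"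
  proof (cases "i \<in> {1..p+1} \<and> k \<in> {1..p+1}")
    case True
    then have "(A [^]\<^bsub>UT (p+1) m\<^esub> p) i k v = mpw (p+1) (\<lambda>i j. A i j v) p i k"
      using UT_pow_in[OF A] by blast
    also have "\<dots> = (if i = k then 1 else 0) + (if i = 1 \<and> k = p+1 then (\<Prod>s\<in>{1..p}. A s (Suc s) v) else 0)"
      by (rule mpw_p[OF p char refl]) (use True carrierD[OF A] in auto)
    finally show ?thesis using True p by (auto simp: Emat_def UT_one_def prime_gt_1_nat)
  next
    case False
    then show ?thesis using UT_pow_out[OF A, of i k p] by (auto simp: Emat_def UT_one_def)
  qed
qed

definition shape :: "nat \<Rightarrow> ('a::field) utmat \<Rightarrow> bool" where
  "shape l Y \<longleftrightarrow> (\<forall>i k. (i \<notin> {1..l} \<or> k \<notin> {1..l}) \<longrightarrow> Y i k = (\<lambda>_. 0)) \<and>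
     (\<forall>k. Y l k = UT_one l l k) \<and> (\<forall>i. Y i 1 = UT_one l i 1)"

lemma shape_carrier: "A \<in> UT_carrier l m \<Longrightarrow> l \<ge> 1 \<Longrightarrow> shape l A"
  unfolding shape_def
proof (intro conjI allI impI)
  assume A: "A \<in> UT_carrier l m" and l: "l \<ge> 1"
  show "\<And>i k. i \<notin> {1..l} \<or> k \<notin> {1..l} \<Longrightarrow> A i k = (\<lambda>_. 0)" using carrierD(1)[OF A] by blast
  fix k show "A l k = UT_one l l k"
    using carrierD[OF A] l by (cases "k \<in> {1..l}") (auto simp: UT_one_def)
next
  fix i
  assume A: "A \<in> UT_carrier l m" and l: "l \<ge> 1"
  show "A i 1 = UT_one l i 1"
    using carrierD[OF A] l by (cases "i \<in> {1..l}"; cases "i = 1") (auto simp: UT_one_def)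
qed

lemma shape_Emat: "l \<ge> 2 \<Longrightarrow> shape l (Emat l f)"
  by (auto simp: shape_def Emat_def UT_one_def)

lemma UT_one_1l: "l \<ge> 2 \<Longrightarrow> UT_one l 1 l = (\<lambda>_. 0)"
  by (auto simp: UT_one_def)

lemma UT_one_app: "UT_one l i j v = (if i = j \<and> i \<in> {1..l} then 1 else 0)"
  by (simp add: UT_one_def)

lemma if01_mult: "(if P then 1 else 0) * (x::'a::comm_ring_1) = (if P then x else 0)"
  "x * (if P then 1 else 0) = (if P then x else 0)"
  "(if P then a else 0) * x = (if P then a * x else 0)"
  "x * (if P then a else 0) = (if P then x * a else 0)"
  by simp_all

lemma Emat_mult_left:
  assumes l: "l \<ge> 2" and Y: "shape l Y"
  shows "UT_mult l (Emat l f) Y = (\<lambda>i k v. Y i k v + (if i = 1 \<and> k = l then f v else 0))"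
proof (intro ext)
  fix i k v
  have e: "\<And>j. Emat l f i j v = UT_one l i j v + (if i = 1 \<and> j = l then f v else 0)"
    using l by (auto simp: Emat_def UT_one_def)
  have "UT_mult l (Emat l f) Y i k v = (\<Sum>j\<in>{1..l}. UT_one l i j v * Y j k v)
     + (\<Sum>j\<in>{1..l}. (if i = 1 \<and> j = l then f v else 0) * Y j k v)"
    by (simp add: UT_mult_def e distrib_right sum.distrib)
  also have "(\<Sum>j\<in>{1..l}. UT_one l i j v * Y j k v) = Y i k v"
    using Y by (cases "i \<in> {1..l}") (auto simp: UT_one_app shape_def if01_mult cong: if_cong)
  also have "(\<Sum>j\<in>{1..l}. (if i = 1 \<and> j = l then f v else 0) * Y j k v) = (if i = 1 then f v * Y l k v else 0)"
    using l by (auto simp: if01_mult cong: if_cong)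
  also have "\<dots> = (if i = 1 \<and> k = l then f v else 0)"
    using Y l by (auto simp: shape_def UT_one_def)
  finally show "UT_mult l (Emat l f) Y i k v = Y i k v + (if i = 1 \<and> k = l then f v else 0)" .
qed

lemma Emat_mult_right:
  assumes l: "l \<ge> 2" and Y: "shape l Y"
  shows "UT_mult l Y (Emat l f) = (\<lambda>i k v. Y i k v + (if i = 1 \<and> k = l then f v else 0))"
proof (intro ext)
  fix i k v
  have e: "\<And>j. Emat l f j k v = UT_one l j k v + (if j = 1 \<and> k = l then f v else 0)"
    using l by (auto simp: Emat_def UT_one_def)
  have "UT_mult l Y (Emat l f) i k v = (\<Sum>j\<in>{1..l}. Y i j v * UT_one l j k v)
     + (\<Sum>j\<in>{1..l}. Y i j v * (if j = 1 \<and> k = l then f v else 0))"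
    by (simp add: UT_mult_def e distrib_left sum.distrib)
  also have "(\<Sum>j\<in>{1..l}. Y i j v * UT_one l j k v) = Y i k v"
    using Y by (cases "k \<in> {1..l}") (auto simp: UT_one_app shape_def if01_mult cong: if_cong)
  also have "(\<Sum>j\<in>{1..l}. Y i j v * (if j = 1 \<and> k = l then f v else 0)) = (if k = l then Y i 1 v * f v else 0)"
    using l by (auto simp: if01_mult cong: if_cong)
  also have "\<dots> = (if i = 1 \<and> k = l then f v else 0)"
    using Y l by (auto simp: shape_def UT_one_def)
  finally show "UT_mult l Y (Emat l f) i k v = Y i k v + (if i = 1 \<and> k = l then f v else 0)" .
qed

lemma Emat_mult:
  assumes l: "l \<ge> 2"
  shows "UT_mult l (Emat l f) (Emat l g) = Emat l (\<lambda>v. f v + g v)"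
proof (intro ext)
  fix i j v
  show "UT_mult l (Emat l f) (Emat l g) i j v = Emat l (\<lambda>v. f v + g v) i j v"
    unfolding Emat_mult_left[OF l shape_Emat[OF l]] using l by (auto simp: Emat_def UT_one_app)
qed

lemma Emat_zero: "l \<ge> 2 \<Longrightarrow> Emat l (\<lambda>_. 0) = UT_one l"
  by (auto simp: Emat_def UT_one_def intro!: ext)

lemma Emat_1l [simp]: "Emat l f 1 l = f"
  by (simp add: Emat_def)

lemma Emat_pow:
  assumes l: "l \<ge> 2"
  shows "Emat l f [^]\<^bsub>UT l m\<^esub> (n::nat) = Emat l (\<lambda>v. of_nat n * f v)"
proof (induction n)
  case 0
  then show ?case by (simp add: Emat_zero[OF l])
next
  case (Suc n)
  then show ?case by (simp add: Emat_mult[OF l] algebra_simps)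
qed

lemma ml_zero: "multilinear_on m i j (\<lambda>_. 0)"
  by (simp add: multilinear_on_def)

lemma ml_one: "multilinear_on m i i (\<lambda>_. 1)"
  by (simp add: multilinear_on_def)

lemma ml_add:
  assumes "multilinear_on m i j F" "multilinear_on m i j G"
  shows "multilinear_on m i j (\<lambda>v. F v + G v)"
  using assms unfolding multilinear_on_def by (simp add: algebra_simps) metis

lemma ml_scale:
  assumes "multilinear_on m i j F"
  shows "multilinear_on m i j (\<lambda>v. c * F v)"
  using assms unfolding multilinear_on_def by (simp add: algebra_simps)

lemma ml_dep:
  assumes "multilinear_on m i j F" "\<And>k c. k \<in> {i..<j} \<Longrightarrow> c < m \<Longrightarrow> v k c = w k c"
  shows "F v = F w"
  using assms unfolding multilinear_on_def by blast

lemma ml_mult: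
  assumes ab: "a \<le> b" and bc: "b \<le> c" and F: "multilinear_on m a b F" and G: "multilinear_on m b c G"
  shows "multilinear_on m a c (\<lambda>v. F v * G v)"
  unfolding multilinear_on_def
proof (intro conjI allI impI ballI)
  fix v w :: "'a vfam" assume "\<forall>k\<in>{a..<c}. \<forall>ca<m. v k ca = w k ca"
  then show "F v * G v = F w * G w"
    using ml_dep[OF F, of v w] ml_dep[OF G, of v w] ab bc by auto
next
  fix k v x y assume k: "k \<in> {a..<c}"
  show "F (v(k := \<lambda>ca. x ca + y ca)) * G (v(k := \<lambda>ca. x ca + y ca)) =
        F (v(k := x)) * G (v(k := x)) + F (v(k := y)) * G (v(k := y))"
  proof (cases "k < b")
    case True
    have "\<And>z. G (v(k := z)) = G v" by (rule ml_dep[OF G]) (use True in auto)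
    moreover have "F (v(k := \<lambda>ca. x ca + y ca)) = F (v(k := x)) + F (v(k := y))"
      using F True k unfolding multilinear_on_def by auto
    ultimately show ?thesis by (simp add: algebra_simps)
  next
    case False
    have "\<And>z. F (v(k := z)) = F v" by (rule ml_dep[OF F]) (use False in auto)
    moreover have "G (v(k := \<lambda>ca. x ca + y ca)) = G (v(k := x)) + G (v(k := y))"
      using G False k unfolding multilinear_on_def by auto
    ultimately show ?thesis by (simp add: algebra_simps)
  qed
next
  fix k v s x assume k: "k \<in> {a..<c}"
  show "F (v(k := \<lambda>ca. s * x ca)) * G (v(k := \<lambda>ca. s * x ca)) = s * (F (v(k := x)) * G (v(k := x)))"
  proof (cases "k < b")
    case True
    have "\<And>z. G (v(k := z)) = G v" by (rule ml_dep[OF G]) (use True in auto)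
    moreover have "F (v(k := \<lambda>ca. s * x ca)) = s * F (v(k := x))"
      using F True k unfolding multilinear_on_def by auto
    ultimately show ?thesis by (simp add: algebra_simps)
  next
    case False
    have "\<And>z. F (v(k := z)) = F v" by (rule ml_dep[OF F]) (use False in auto)
    moreover have "G (v(k := \<lambda>ca. s * x ca)) = s * G (v(k := x))"
      using G False k unfolding multilinear_on_def by auto
    ultimately show ?thesis by (simp add: algebra_simps)
  qed
qed

lemma ml_prod:
  assumes L: "\<And>k. k \<in> {a..<b} \<Longrightarrow> multilinear_on m k (Suc k) (L k)" and ab: "a \<le> b"
  shows "multilinear_on m a b (\<lambda>v. \<Prod>k\<in>{a..<b}. L k v)"
  using ab L
proof (induction b)
  case 0
  then show ?case using ml_one[of m 0] by simp
next
  case (Suc b)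
  show ?case
  proof (cases "a = Suc b")
    case True
    then show ?thesis using ml_one[of m a] by simp
  next
    case False
    then have ab: "a \<le> b" using Suc.prems by simp
    have "multilinear_on m a (Suc b) (\<lambda>v. (\<Prod>k\<in>{a..<b}. L k v) * L b v)"
      by (rule ml_mult[OF ab _ Suc.IH[OF ab] Suc.prems(2)]) (use ab Suc.prems in auto)
    then show ?thesis using ab by (simp add: prod.atLeastLessThan_Suc)
  qed
qed

lemma ml_coord:
  assumes "d < m"
  shows "multilinear_on m k (Suc k) (\<lambda>v. s * v k d)"
  using assms unfolding multilinear_on_def by (auto simp: algebra_simps)

lemma Emat_carrier:
  assumes l: "l \<ge> 2" and f: "multilinear_on m 1 l f"
  shows "Emat l f \<in> UT_carrier l m"
  using l f by (auto simp: UT_carrier_def Emat_def UT_one_def ml_zero)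

definition phi :: "nat \<Rightarrow> ('a::field) utmat \<Rightarrow> 'a entry" where
  "phi p A = (\<lambda>v. \<Prod>k\<in>{1..p}. A k (k+1) v)"

lemma phi_ml:
  assumes A: "A \<in> UT_carrier (p+1) m"
  shows "multilinear_on m 1 (p+1) (phi p A)"
proof -
  have eq: "phi p A = (\<lambda>v. \<Prod>k\<in>{1..<p+1}. A k (Suc k) v)"
    unfolding phi_def by (intro ext prod.cong) auto
  show ?thesis unfolding eq
    by (rule ml_prod) (use carrierD(4)[OF A] in auto)
qed

lemma inv_Emat:
  assumes l: "l \<ge> 2" and f: "multilinear_on m 1 l f"
  shows "inv\<^bsub>UT l m\<^esub> (Emat l f) = Emat l (\<lambda>v. - f v)"
  unfolding m_inv_def
proof (rule the_equality)
  have mf: "multilinear_on m 1 l (\<lambda>v. - f v)" using ml_scale[OF f, of "-1"] by simp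
  show "Emat l (\<lambda>v. - f v) \<in> carrier (UT l m) \<and>
    Emat l f \<otimes>\<^bsub>UT l m\<^esub> Emat l (\<lambda>v. - f v) = \<one>\<^bsub>UT l m\<^esub> \<and>
    Emat l (\<lambda>v. - f v) \<otimes>\<^bsub>UT l m\<^esub> Emat l f = \<one>\<^bsub>UT l m\<^esub>"
    using Emat_carrier[OF l mf] by (simp add: Emat_mult[OF l] Emat_zero[OF l])
next
  fix y assume y: "y \<in> carrier (UT l m) \<and> Emat l f \<otimes>\<^bsub>UT l m\<^esub> y = \<one>\<^bsub>UT l m\<^esub> \<and>
    y \<otimes>\<^bsub>UT l m\<^esub> Emat l f = \<one>\<^bsub>UT l m\<^esub>"
  then have sh: "shape l y" using shape_carrier[of y l m] l by simp
  from y have eq: "UT_mult l (Emat l f) y = UT_one l" by simp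
  show "y = Emat l (\<lambda>v. - f v)"
  proof (intro ext)
    fix i k v
    have "UT_mult l (Emat l f) y i k v = UT_one l i k v" using eq by simp
    then have "y i k v + (if i = 1 \<and> k = l then f v else 0) = UT_one l i k v"
      unfolding Emat_mult_left[OF l sh] .
    then show "y i k v = Emat l (\<lambda>v. - f v) i k v"
    proof (cases "i = 1 \<and> k = l")
      case True
      then have "y i k v + f v = 0" using \<open>y i k v + _ = _\<close> l by (simp add: UT_one_app)
      then show ?thesis using True by (simp add: Emat_def eq_neg_iff_add_eq_0)
    next
      case False
      then show ?thesis using \<open>y i k v + _ = _\<close> by (auto simp add: Emat_def)
    qed
  qed
qed

definition Bmat :: "nat \<Rightarrow> 'a::field \<Rightarrow> (nat \<Rightarrow> nat) \<Rightarrow> 'a utmat" where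
  "Bmat p s c = (\<lambda>i j. if i \<in> {1..p+1} \<and> j = i then (\<lambda>_. 1)
      else if i \<in> {1..p} \<and> j = Suc i then (\<lambda>v. (if i = 1 then s else 1) * v i (c i)) else (\<lambda>_. 0))"


lemma Bmat_carrier:
  assumes c: "\<And>k. k \<in> {1..p} \<Longrightarrow> c k < m"
  shows "Bmat p s c \<in> UT_carrier (p+1) m"
  unfolding UT_carrier_def mem_Collect_eq
proof (intro conjI allI impI ballI)
  fix i j assume "\<not> (i \<in> {1..p + 1} \<and> j \<in> {1..p + 1})"
  then show "Bmat p s c i j = (\<lambda>_. 0)" by (auto simp: Bmat_def)
next
  fix i assume "i \<in> {1..p+1}" then show "Bmat p s c i i = (\<lambda>_. 1)" by (simp add: Bmat_def)
next
  fix i j assume "i \<in> {1..p+1}" "j \<in> {1..p+1}" "j < i"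
  then show "Bmat p s c i j = (\<lambda>_. 0)" by (simp add: Bmat_def)
next
  fix i j assume ij: "i \<in> {1..p+1}" "j \<in> {1..p+1}" "i < j"
  show "multilinear_on m i j (Bmat p s c i j)"
  proof (cases "j = Suc i")
    case True
    then have "i \<in> {1..p}" using ij by auto
    then show ?thesis using True c[of i] ij by (simp add: Bmat_def ml_coord)
  next
    case False
    then show ?thesis using ij by (simp add: Bmat_def ml_zero)
  qed
qed

lemma phi_Bmat:
  assumes p: "p \<ge> 1"
  shows "phi p (Bmat p s c) = (\<lambda>v. s * (\<Prod>k\<in>{1..p}. v k (c k)))"
proof (intro ext)
  fix v
  have "phi p (Bmat p s c) v = (\<Prod>k\<in>{1..p}. (if k = 1 then s else 1) * v k (c k))"
    unfolding phi_def Bmat_def by (intro prod.cong) auto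
  also have "\<dots> = (\<Prod>k\<in>{1..p}. (if k = 1 then s else 1)) * (\<Prod>k\<in>{1..p}. v k (c k))"
    by (rule prod.distrib)
  also have "(\<Prod>k\<in>{1..p}. (if k = 1 then s else 1)) = s"
    using p by (simp add: prod.delta')
  finally show "phi p (Bmat p s c) v = s * (\<Prod>k\<in>{1..p}. v k (c k))" .
qed


lemma lin_expand:
  fixes g :: "(nat \<Rightarrow> 'a::field) \<Rightarrow> 'a"
  assumes add: "\<And>x y. g (\<lambda>c. x c + y c) = g x + g y"
    and scal: "\<And>a x. g (\<lambda>c. a * x c) = a * g x"
    and dep: "\<And>x y. (\<And>c. c < m \<Longrightarrow> x c = y c) \<Longrightarrow> g x = g y"
  shows "g x = (\<Sum>c\<in>{0..<m}. x c * g (\<lambda>c'. if c' = c then 1 else 0))"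
proof -
  have "g (\<lambda>c. if c < n then x c else 0) = (\<Sum>c\<in>{0..<n}. x c * g (\<lambda>c'. if c' = c then 1 else 0))" for n
  proof (induction n)
    case 0
    have "g (\<lambda>c. 0) = g (\<lambda>c. 0 * x c)" by simp
    also have "\<dots> = 0" by (simp only: scal) simp
    finally show ?case by simp
  next
    case (Suc n)
    have "(\<lambda>c. if c < Suc n then x c else 0) =
      (\<lambda>c. (if c < n then x c else 0) + x n * (if c = n then 1 else 0))"
      by (auto simp: less_Suc_eq intro!: ext)
    then have "g (\<lambda>c. if c < Suc n then x c else 0) = g (\<lambda>c. if c < n then x c else 0)
        + x n * g (\<lambda>c'. if c' = n then 1 else 0)"
      by (simp add: add scal)
    then show ?case using Suc.IH by simp
  qed
  moreover have "g x = g (\<lambda>c. if c < m then x c else 0)" by (rule dep) simp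
  ultimately show ?thesis by simp
qed

definition delta :: "nat \<Rightarrow> nat \<Rightarrow> 'a::field vfam" where
  "delta k c = (\<lambda>k' c'. if k' = k \<and> c' = c then 1 else 0)"

lemma entry_expand:
  assumes f: "multilinear_on m k (Suc k) f"
  shows "f v = (\<Sum>c\<in>{0..<m}. v k c * f (delta k c))"
proof -
  define g where "g = (\<lambda>z. f (v(k := z)))"
  have "g (v k) = (\<Sum>c\<in>{0..<m}. v k c * g (\<lambda>c'. if c' = c then 1 else 0))"
  proof (rule lin_expand)
    show "\<And>x y. g (\<lambda>c. x c + y c) = g x + g y" using f by (simp add: g_def multilinear_on_def)
    show "\<And>a x. g (\<lambda>c. a * x c) = a * g x" using f by (simp add: g_def multilinear_on_def)
    show "\<And>x y. (\<And>c. c < m \<Longrightarrow> x c = y c) \<Longrightarrow> g x = g y"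
      unfolding g_def by (rule ml_dep[OF f]) auto
  qed
  moreover have "\<And>c. g (\<lambda>c'. if c' = c then 1 else 0) = f (delta k c)"
    unfolding g_def by (rule ml_dep[OF f]) (auto simp: delta_def)
  ultimately show ?thesis by (simp add: g_def)
qed


lemma foldr_Emat:
  assumes p: "prime p" and char: "of_nat p = (0::'a::field)"
  shows "set As \<subseteq> UT_carrier (p+1) m \<Longrightarrow>
    foldr (\<lambda>A acc. (A [^]\<^bsub>UT (p+1) m\<^esub> p) \<otimes>\<^bsub>UT (p+1) m\<^esub> acc) As \<one>\<^bsub>UT (p+1) m\<^esub>
     = Emat (p+1) (\<lambda>v. sum_list (map (\<lambda>A. phi p A v) (As :: 'a utmat list)))"
proof (induction As)
  case Nil
  have l: "(2::nat) \<le> p + 1" using prime_ge_2_nat[OF p] by simp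
  show ?case using Emat_zero[OF l, where 'a='a] by simp
next
  case (Cons A As)
  have l: "(2::nat) \<le> p + 1" using prime_ge_2_nat[OF p] by simp
  have A: "A [^]\<^bsub>UT (p+1) m\<^esub> p = Emat (p+1) (phi p A)"
    using part1[OF p char, of A m] Cons.prems unfolding phi_def by simp
  have "foldr (\<lambda>A acc. (A [^]\<^bsub>UT (p+1) m\<^esub> p) \<otimes>\<^bsub>UT (p+1) m\<^esub> acc) (A # As) \<one>\<^bsub>UT (p+1) m\<^esub>
     = UT_mult (p+1) (Emat (p+1) (phi p A)) (Emat (p+1) (\<lambda>v. sum_list (map (\<lambda>A. phi p A v) As)))"
    using Cons by (simp only: foldr_Cons o_apply A UT_simps) simp
  also have "\<dots> = Emat (p+1) (\<lambda>v. sum_list (map (\<lambda>A. phi p A v) (A # As)))"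
    by (simp only: Emat_mult[OF l]) simp
  finally show ?case .
qed

lemma card_W: "card ({0..<m} \<rightarrow>\<^sub>E ({1..p} \<rightarrow>\<^sub>E ({0..<m::nat} \<rightarrow>\<^sub>E (UNIV::'a::finite set))))
   = card (UNIV::'a set) ^ (m * p * m)"
  by (simp add: card_PiE power_mult[symmetric] mult.commute mult.left_commute)

lemma card_Cf: "card ({1..p::nat} \<rightarrow>\<^sub>E {0..<m::nat}) = m ^ p"
  by (simp add: card_PiE)

lemma four_pow: "q \<ge> 1 \<Longrightarrow> (4::nat) ^ q \<ge> q + 3"
proof (induction q)
  case 0 then show ?case by simp
next
  case (Suc q)
  then show ?case by (cases "q = 0") auto
qed

lemma count_ineq:
  assumes p: "3 \<le> p" and m: "4 \<le> (m::nat)"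
  shows "1 + m * p * m < m ^ p"
proof -
  have pp: "p = 2 + (p - 2)" using p by simp
  have "m ^ p = m ^ 2 * m ^ (p - 2)" by (subst pp) (simp only: power_add)
  also have "m ^ (p - 2) \<ge> 4 ^ (p - 2)" using m by (simp add: power_mono)
  moreover have "(4::nat) ^ (p - 2) \<ge> p + 1" using four_pow[of "p - 2"] p by simp
  ultimately have "m ^ p \<ge> m ^ 2 * (p + 1)"
    by (metis (no_types, lifting) dual_order.trans mult_le_mono2 \<open>m ^ p = _\<close>)
  moreover have "m ^ 2 * (p + 1) = m * p * m + m * m" by (simp add: power2_eq_square algebra_simps)
  moreover have "m * m \<ge> 16" using m mult_le_mono[OF m m] by simp
  ultimately show ?thesis by linarith
qed

lemma prod_if01: "finite K \<Longrightarrow> (\<Prod>k\<in>K. (if P k then 1 else 0 :: 'a::comm_semiring_1)) = (if \<forall>k\<in>K. P k then 1 else 0)"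
  by (induction K rule: finite_induct) auto

lemma inj_fa:
  "inj_on (\<lambda>a. \<lambda>v. \<Sum>c\<in>{1..p} \<rightarrow>\<^sub>E {0..<m::nat}. a c * (\<Prod>k\<in>{1..p::nat}. v k (c k)))
      (({1..p} \<rightarrow>\<^sub>E {0..<m}) \<rightarrow>\<^sub>E (UNIV :: 'a::field set))"
proof (rule inj_onI)
  fix a b :: "(nat \<Rightarrow> nat) \<Rightarrow> 'a"
  assume a: "a \<in> ({1..p} \<rightarrow>\<^sub>E {0..<m}) \<rightarrow>\<^sub>E UNIV" and b: "b \<in> ({1..p} \<rightarrow>\<^sub>E {0..<m}) \<rightarrow>\<^sub>E UNIV"
    and eq: "(\<lambda>v. \<Sum>c\<in>{1..p} \<rightarrow>\<^sub>E {0..<m}. a c * (\<Prod>k\<in>{1..p}. v k (c k))) =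
             (\<lambda>v. \<Sum>c\<in>{1..p} \<rightarrow>\<^sub>E {0..<m}. b c * (\<Prod>k\<in>{1..p}. v k (c k)))"
  show "a = b"
  proof (rule PiE_ext[OF a b])
    fix c0 assume c0: "c0 \<in> {1..p} \<rightarrow>\<^sub>E {0..<m}"
    define v0 :: "'a vfam" where "v0 = (\<lambda>k d. if d = c0 k then 1 else 0)"
    have key: "\<And>c. c \<in> {1..p} \<rightarrow>\<^sub>E {0..<m} \<Longrightarrow> (\<Prod>k\<in>{1..p}. v0 k (c k)) = (if c = c0 then 1 else 0)"
    proof -
      fix c assume c: "c \<in> {1..p} \<rightarrow>\<^sub>E {0..<m}"
      have "(\<Prod>k\<in>{1..p}. v0 k (c k)) = (if \<forall>k\<in>{1..p}. c k = c0 k then 1 else 0)"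
        unfolding v0_def by (rule prod_if01) simp
      also have "(\<forall>k\<in>{1..p}. c k = c0 k) \<longleftrightarrow> c = c0"
        using PiE_ext[OF c c0] by auto
      finally show "(\<Prod>k\<in>{1..p}. v0 k (c k)) = (if c = c0 then 1 else 0)" by simp
    qed
    have "\<And>a. (\<Sum>c\<in>{1..p} \<rightarrow>\<^sub>E {0..<m}. a c * (\<Prod>k\<in>{1..p}. v0 k (c k))) = a c0"
    proof -
      fix a :: "(nat \<Rightarrow> nat) \<Rightarrow> 'a"
      have "(\<Sum>c\<in>{1..p} \<rightarrow>\<^sub>E {0..<m}. a c * (\<Prod>k\<in>{1..p}. v0 k (c k)))
          = (\<Sum>c\<in>{1..p} \<rightarrow>\<^sub>E {0..<m}. (if c = c0 then a c else 0))"
      proof (rule sum.cong[OF refl])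
        fix c assume "c \<in> {1..p} \<rightarrow>\<^sub>E {0..<m}"
        then show "a c * (\<Prod>k\<in>{1..p}. v0 k (c k)) = (if c = c0 then a c else 0)"
          by (subst key) auto
      qed
      also have "\<dots> = a c0" using c0 by (simp add: finite_PiE)
      finally show "(\<Sum>c\<in>{1..p} \<rightarrow>\<^sub>E {0..<m}. a c * (\<Prod>k\<in>{1..p}. v0 k (c k))) = a c0" .
    qed
    then show "a c0 = b c0" using fun_cong[OF eq, of v0] by metis
  qed
qed

lemma pow_phi:
  assumes p: "prime p" and char: "of_nat p = (0::'a::field)" and A: "A \<in> UT_carrier (p+1) m"
  shows "A [^]\<^bsub>UT (p+1) m\<^esub> p = Emat (p+1) (phi p (A :: 'a utmat))"
  using part1[OF p char A] unfolding phi_def .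

lemma gen_sub:
  assumes p: "prime p" and char: "of_nat p = (0::'a::field)"
  shows "x \<in> generate (UT (p+1) m) {A [^]\<^bsub>UT (p+1) m\<^esub> p | A. A \<in> carrier (UT (p+1) m)} \<Longrightarrow>
     \<exists>f. multilinear_on m 1 (p+1) f \<and> x = Emat (p+1) (f :: 'a entry)"
proof (induction rule: generate.induct)
  have l: "(2::nat) \<le> p + 1" using prime_ge_2_nat[OF p] by simp
  {
    case one
    show ?case using Emat_zero[OF l, where 'a='a] ml_zero[of m 1 "p+1"] by (intro exI[of _ "\<lambda>_. 0"]) simp
  next
    case (incl h)
    then obtain A where A: "A \<in> UT_carrier (p+1) m" and h: "h = A [^]\<^bsub>UT (p+1) m\<^esub> p" by auto
    show ?case using pow_phi[OF p char A] phi_ml[OF A] h by blast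
  next
    case (inv h)
    then obtain A where A: "A \<in> UT_carrier (p+1) m" and h: "h = A [^]\<^bsub>UT (p+1) m\<^esub> p" by auto
    have "inv\<^bsub>UT (p+1) m\<^esub> h = Emat (p+1) (\<lambda>v. - phi p A v)"
      using inv_Emat[OF l phi_ml[OF A]] pow_phi[OF p char A] h by simp
    moreover have "multilinear_on m 1 (p+1) (\<lambda>v. - phi p A v)" using ml_scale[OF phi_ml[OF A], of "-1"] by simp
    ultimately show ?case by blast
  next
    case (eng h1 h2)
    then obtain f g where "multilinear_on m 1 (p+1) f" "h1 = Emat (p+1) f"
      "multilinear_on m 1 (p+1) g" "h2 = Emat (p+1) g" by blast
    then show ?case using Emat_mult[OF l, of f g] ml_add[of m 1 "p+1" f g]
      by (intro exI[of _ "\<lambda>v. f v + g v"]) simp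
  }
qed

lemma gen_sum:
  assumes p: "prime p" and char: "of_nat p = (0::'a::field)"
    and D: "finite D" "D \<subseteq> {1..p} \<rightarrow>\<^sub>E {0..<m}"
  shows "Emat (p+1) (\<lambda>v. \<Sum>c\<in>D. a c * (\<Prod>k\<in>{1..p}. v k (c k)) :: 'a)
     \<in> generate (UT (p+1) m) {A [^]\<^bsub>UT (p+1) m\<^esub> p | A. A \<in> carrier (UT (p+1) m)}"
  using D
proof (induction rule: finite_subset_induct)
  have l: "(2::nat) \<le> p + 1" using prime_ge_2_nat[OF p] by simp
  {
    case empty
    show ?case using Emat_zero[OF l, where 'a='a] generate.one[of "UT (p+1) m"] by simp
  next
    case (insert c F)
    have cm: "\<And>k. k \<in> {1..p} \<Longrightarrow> c k < m" using insert(2) by auto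
    have B: "Bmat p (a c) c \<in> UT_carrier (p+1) m" by (rule Bmat_carrier[OF cm])
    have "Bmat p (a c) c [^]\<^bsub>UT (p+1) m\<^esub> p = Emat (p+1) (\<lambda>v. a c * (\<Prod>k\<in>{1..p}. v k (c k)))"
      using pow_phi[OF p char B] phi_Bmat[of p "a c" c] prime_ge_1_nat[OF p] by simp
    then have "Emat (p+1) (\<lambda>v. a c * (\<Prod>k\<in>{1..p}. v k (c k)))
       \<in> generate (UT (p+1) m) {A [^]\<^bsub>UT (p+1) m\<^esub> p | A. A \<in> carrier (UT (p+1) m)}"
      using B by (intro generate.incl) (auto intro!: exI[of _ "Bmat p (a c) c"])
    from generate.eng[OF this insert(4)]
    show ?case using insert(1,3) Emat_mult[OF l, of "\<lambda>v. a c * (\<Prod>k\<in>{1..p}. v k (c k))"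
       "\<lambda>v. \<Sum>c\<in>F. a c * (\<Prod>k\<in>{1..p}. v k (c k))"] by simp
  }
qed

theorem lemma1:
  fixes p m :: nat
  assumes "p = card (UNIV :: 'a set)" and "prime p" and "odd p" and "m \<ge> 1"
  defines "U \<equiv> (UT (p + 1) m :: ('a::{field,finite}) utmat monoid)"
  shows
    "(\<forall>A\<in>carrier U.
        (A [^]\<^bsub>U\<^esub> p) 1 (p + 1) = (\<lambda>v. \<Prod>k\<in>{1..p}. A k (k + 1) v) \<and>
        (\<forall>i j. (i, j) \<noteq> (1, p + 1) \<longrightarrow> (A [^]\<^bsub>U\<^esub> p) i j = \<one>\<^bsub>U\<^esub> i j))
     \<and> (pth_power_subgroup U p \<noteq> {\<one>\<^bsub>U\<^esub>} \<and>
        (\<forall>x\<in>pth_power_subgroup U p. \<forall>y\<in>carrier U. x \<otimes>\<^bsub>U\<^esub> y = y \<otimes>\<^bsub>U\<^esub> x) \<and>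
        (\<forall>x\<in>pth_power_subgroup U p. x [^]\<^bsub>U\<^esub> p = \<one>\<^bsub>U\<^esub>))
     \<and> (p \<ge> 3 \<and> m \<ge> 4 \<longrightarrow>
        (\<exists>g\<in>pth_power_subgroup U p. g \<noteq> \<one>\<^bsub>U\<^esub> \<and>
           (\<forall>n::nat. g [^]\<^bsub>U\<^esub> n \<noteq> \<one>\<^bsub>U\<^esub> \<longrightarrow>
              (\<forall>As. length As = m \<and> set As \<subseteq> carrier U \<longrightarrow>
                 g [^]\<^bsub>U\<^esub> n \<noteq> foldr (\<lambda>A acc. (A [^]\<^bsub>U\<^esub> p) \<otimes>\<^bsub>U\<^esub> acc) As \<one>\<^bsub>U\<^esub>))))"
proof -
  have p: "prime p" by fact
  have char: "of_nat p = (0::'a)" using char_p assms(1,2) by blast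
  have l: "(2::nat) \<le> p + 1" using prime_ge_2_nat[OF p] by simp
  have p1: "p \<ge> 1" using prime_ge_1_nat[OF p] .
  have cU: "carrier U = UT_carrier (p+1) m" "mult U = UT_mult (p+1)" "one U = UT_one (p+1)"
    by (simp_all add: U_def)
  have powU: "\<And>A n. A [^]\<^bsub>U\<^esub> (n::nat) = A [^]\<^bsub>UT (p+1) m\<^esub> n" by (simp add: U_def)
  have genU: "pth_power_subgroup U p = generate (UT (p+1) m) {A [^]\<^bsub>UT (p+1) m\<^esub> p | A. A \<in> carrier (UT (p+1) m)}"
    by (simp add: U_def pth_power_subgroup_def)
  have one_eq: "UT_one (p+1) = Emat (p+1) (\<lambda>_. 0::'a)" by (rule Emat_zero[OF l, symmetric])
  let ?G = "generate (UT (p+1) m :: 'a utmat monoid) {A [^]\<^bsub>UT (p+1) m\<^esub> p | A. A \<in> carrier (UT (p+1) m)}"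
  have P1: "\<forall>A\<in>carrier U.
        (A [^]\<^bsub>U\<^esub> p) 1 (p + 1) = (\<lambda>v. \<Prod>k\<in>{1..p}. A k (k + 1) v) \<and>
        (\<forall>i j. (i, j) \<noteq> (1, p + 1) \<longrightarrow> (A [^]\<^bsub>U\<^esub> p) i j = \<one>\<^bsub>U\<^esub> i j)"
  proof
    fix A assume "A \<in> carrier U"
    then have A: "A \<in> UT_carrier (p+1) m" using cU by simp
    show "(A [^]\<^bsub>U\<^esub> p) 1 (p + 1) = (\<lambda>v. \<Prod>k\<in>{1..p}. A k (k + 1) v) \<and>
        (\<forall>i j. (i, j) \<noteq> (1, p + 1) \<longrightarrow> (A [^]\<^bsub>U\<^esub> p) i j = \<one>\<^bsub>U\<^esub> i j)"
      unfolding powU part1[OF p char A] cU by (auto simp: Emat_def)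
  qed
  have GS: "\<And>x. x \<in> ?G \<Longrightarrow> \<exists>f. multilinear_on m 1 (p+1) f \<and> x = Emat (p+1) f"
    using gen_sub[OF p char] by blast
  have nontriv: "pth_power_subgroup U p \<noteq> {\<one>\<^bsub>U\<^esub>}"
  proof -
    define c0 :: "nat \<Rightarrow> nat" where "c0 = (\<lambda>_. 0)"
    have B: "Bmat p (1::'a) c0 \<in> UT_carrier (p+1) m"
      by (rule Bmat_carrier) (use assms(4) in \<open>simp add: c0_def\<close>)
    have Bp: "Bmat p (1::'a) c0 [^]\<^bsub>UT (p+1) m\<^esub> p = Emat (p+1) (\<lambda>v. 1 * (\<Prod>k\<in>{1..p}. v k (c0 k)))"
      using pow_phi[OF p char B] phi_Bmat[OF p1, of "1::'a" c0] by simp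
    have inG: "Bmat p (1::'a) c0 [^]\<^bsub>UT (p+1) m\<^esub> p \<in> ?G"
      using B by (intro generate.incl) auto
    have "Bmat p (1::'a) c0 [^]\<^bsub>UT (p+1) m\<^esub> p \<noteq> UT_one (p+1)"
    proof
      assume "Bmat p (1::'a) c0 [^]\<^bsub>UT (p+1) m\<^esub> p = UT_one (p+1)"
      then have "Emat (p+1) (\<lambda>v. 1 * (\<Prod>k\<in>{1..p}. v k (c0 k))) 1 (p+1) (\<lambda>_ _. 1) = UT_one (p+1) 1 (p+1) (\<lambda>_ _. (1::'a))"
        using Bp by simp
      then show False using p1 by (simp add: UT_one_app Emat_def)
    qed
    then show ?thesis using inG genU cU by auto
  qed
  have central: "\<forall>x\<in>pth_power_subgroup U p. \<forall>y\<in>carrier U. x \<otimes>\<^bsub>U\<^esub> y = y \<otimes>\<^bsub>U\<^esub> x"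
  proof (intro ballI)
    fix x y assume x: "x \<in> pth_power_subgroup U p" and y: "y \<in> carrier U"
    obtain f where f: "x = Emat (p+1) f" using GS x genU by blast
    have sh: "shape (p+1) y" using y cU shape_carrier[of y "p+1" m] by simp
    show "x \<otimes>\<^bsub>U\<^esub> y = y \<otimes>\<^bsub>U\<^esub> x"
      unfolding cU f Emat_mult_left[OF l sh] Emat_mult_right[OF l sh] ..
  qed
  have expo: "\<forall>x\<in>pth_power_subgroup U p. x [^]\<^bsub>U\<^esub> p = \<one>\<^bsub>U\<^esub>"
  proof
    fix x assume x: "x \<in> pth_power_subgroup U p"
    obtain f where f: "x = Emat (p+1) f" using GS x genU by blast
    show "x [^]\<^bsub>U\<^esub> p = \<one>\<^bsub>U\<^esub>"
      unfolding powU f Emat_pow[OF l] cU char one_eq by simp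
  qed
  have P3: "p \<ge> 3 \<and> m \<ge> 4 \<longrightarrow>
        (\<exists>g\<in>pth_power_subgroup U p. g \<noteq> \<one>\<^bsub>U\<^esub> \<and>
           (\<forall>n::nat. g [^]\<^bsub>U\<^esub> n \<noteq> \<one>\<^bsub>U\<^esub> \<longrightarrow>
              (\<forall>As. length As = m \<and> set As \<subseteq> carrier U \<longrightarrow>
                 g [^]\<^bsub>U\<^esub> n \<noteq> foldr (\<lambda>A acc. (A [^]\<^bsub>U\<^esub> p) \<otimes>\<^bsub>U\<^esub> acc) As \<one>\<^bsub>U\<^esub>)))"
  proof (intro impI)
    assume pm: "p \<ge> 3 \<and> m \<ge> 4"
    define Cf where "Cf = {1..p} \<rightarrow>\<^sub>E {0..<m}"
    define fa :: "((nat \<Rightarrow> nat) \<Rightarrow> 'a) \<Rightarrow> 'a entry"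
      where "fa = (\<lambda>a. \<lambda>v. \<Sum>c\<in>Cf. a c * (\<Prod>k\<in>{1..p}. v k (c k)))"
    define AA where "AA = Cf \<rightarrow>\<^sub>E (UNIV :: 'a set)"
    define W where "W = {0..<m} \<rightarrow>\<^sub>E ({1..p} \<rightarrow>\<^sub>E ({0..<m} \<rightarrow>\<^sub>E (UNIV::'a set)))"
    define rep :: "(nat \<Rightarrow> nat \<Rightarrow> nat \<Rightarrow> 'a) \<Rightarrow> 'a entry"
      where "rep = (\<lambda>w v. \<Sum>i\<in>{0..<m}. \<Prod>k\<in>{1..p}. \<Sum>c\<in>{0..<m}. v k c * w i k c)"
    define R where "R = (\<lambda>(s, w). \<lambda>v. s * rep w v) ` (UNIV \<times> W)"
    have finW: "finite W" unfolding W_def by (simp add: finite_PiE)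
    have cardR: "card R \<le> p * p ^ (m * p * m)"
    proof -
      have "card R \<le> card ((UNIV::'a set) \<times> W)" unfolding R_def
        by (rule card_image_le) (simp add: finW)
      also have "\<dots> = p * p ^ (m * p * m)" using card_W[where 'a='a, of m p] assms(1)
        by (simp add: card_cartesian_product W_def)
      finally show ?thesis .
    qed
    have finR: "finite R" unfolding R_def using finW by simp
    have finCf: "finite Cf" unfolding Cf_def by (simp add: finite_PiE)
    have cardT: "card (fa ` AA) = p ^ (m ^ p)"
    proof -
      have "card (fa ` AA) = card AA"
        by (rule card_image) (use inj_fa[where 'a='a, of p m] in \<open>simp add: fa_def AA_def Cf_def\<close>)
      also have "\<dots> = p ^ (m ^ p)" unfolding AA_def using finCf card_Cf[of p m] assms(1)
        by (simp add: card_PiE Cf_def)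
      finally show ?thesis .
    qed
    have lt: "p * p ^ (m * p * m) < p ^ (m ^ p)"
    proof -
      have "p * p ^ (m * p * m) = p ^ (1 + m * p * m)" by simp
      also have "\<dots> < p ^ (m ^ p)"
        using count_ineq[of p m] pm prime_gt_1_nat[OF p] by (intro power_strict_increasing) auto
      finally show ?thesis .
    qed
    have "\<not> fa ` AA \<subseteq> R"
    proof
      assume "fa ` AA \<subseteq> R"
      then have "card (fa ` AA) \<le> card R" by (rule card_mono[OF finR])
      then show False using cardR cardT lt by linarith
    qed
    then obtain a where a: "a \<in> AA" and faR: "fa a \<notin> R" by blast
    define g where "g = Emat (p+1) (fa a)"
    have gG: "g \<in> pth_power_subgroup U p"
    proof -
      have "Cf \<subseteq> {1..p} \<rightarrow>\<^sub>E {0..<m}" by (simp add: Cf_def)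
      from gen_sum[OF p char finCf this, where a=a] show ?thesis
        unfolding genU g_def fa_def .
    qed
    define w0 where "w0 = (\<lambda>i\<in>{0..<m}. \<lambda>k\<in>{1..p}. \<lambda>c\<in>{0..<m}. (0::'a))"
    have "(\<lambda>v. 0::'a) \<in> R" unfolding R_def
      by (rule image_eqI[of _ _ "(0, w0)"]) (simp_all add: W_def w0_def)
    then have fa0: "fa a \<noteq> (\<lambda>v. 0)" using faR by auto
    have gpow: "\<And>n. g [^]\<^bsub>U\<^esub> (n::nat) = Emat (p+1) (\<lambda>v. of_nat n * fa a v)"
      unfolding powU g_def by (rule Emat_pow[OF l])
    have g1: "g \<noteq> \<one>\<^bsub>U\<^esub>"
    proof
      assume "g = \<one>\<^bsub>U\<^esub>"
      then have "Emat (p+1) (fa a) 1 (p+1) = Emat (p+1) (\<lambda>_. 0) 1 (p+1)" unfolding g_def cU one_eq by simp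
      then show False using fa0 by (simp add: Emat_def)
    qed
    show "\<exists>g\<in>pth_power_subgroup U p. g \<noteq> \<one>\<^bsub>U\<^esub> \<and>
           (\<forall>n::nat. g [^]\<^bsub>U\<^esub> n \<noteq> \<one>\<^bsub>U\<^esub> \<longrightarrow>
              (\<forall>As. length As = m \<and> set As \<subseteq> carrier U \<longrightarrow>
                 g [^]\<^bsub>U\<^esub> n \<noteq> foldr (\<lambda>A acc. (A [^]\<^bsub>U\<^esub> p) \<otimes>\<^bsub>U\<^esub> acc) As \<one>\<^bsub>U\<^esub>))"
    proof (intro bexI[OF _ gG] conjI g1 allI impI notI)
      fix n :: nat and As :: "'a utmat list"
      assume gn: "g [^]\<^bsub>U\<^esub> n \<noteq> \<one>\<^bsub>U\<^esub>"
        and As: "length As = m \<and> set As \<subseteq> carrier U"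
        and eq: "g [^]\<^bsub>U\<^esub> n = foldr (\<lambda>A acc. (A [^]\<^bsub>U\<^esub> p) \<otimes>\<^bsub>U\<^esub> acc) As \<one>\<^bsub>U\<^esub>"
      have n0: "(of_nat n :: 'a) \<noteq> 0"
      proof
        assume "(of_nat n :: 'a) = 0"
        then have "g [^]\<^bsub>U\<^esub> n = \<one>\<^bsub>U\<^esub>" unfolding gpow cU one_eq by simp
        then show False using gn by simp
      qed
      have AsC: "set As \<subseteq> UT_carrier (p+1) m" using As cU by simp
      have "foldr (\<lambda>A acc. (A [^]\<^bsub>U\<^esub> p) \<otimes>\<^bsub>U\<^esub> acc) As \<one>\<^bsub>U\<^esub>
          = foldr (\<lambda>A acc. (A [^]\<^bsub>UT (p+1) m\<^esub> p) \<otimes>\<^bsub>UT (p+1) m\<^esub> acc) As \<one>\<^bsub>UT (p+1) m\<^esub>"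
        by (simp add: U_def)
      also have "\<dots> = Emat (p+1) (\<lambda>v. sum_list (map (\<lambda>A. phi p A v) As))"
        by (rule foldr_Emat[OF p char AsC])
      finally have "Emat (p+1) (\<lambda>v. of_nat n * fa a v) = Emat (p+1) (\<lambda>v. sum_list (map (\<lambda>A. phi p A v) As))"
        using eq gpow by simp
      then have E: "(\<lambda>v. of_nat n * fa a v) = (\<lambda>v. sum_list (map (\<lambda>A. phi p A v) As))"
        by (metis Emat_1l)
      define wA where "wA = (\<lambda>i\<in>{0..<m}. \<lambda>k\<in>{1..p}. \<lambda>c\<in>{0..<m}. (As ! i) k (Suc k) (delta k c))"
      have wW: "wA \<in> W" unfolding wA_def W_def by simp
      have S: "\<And>v. sum_list (map (\<lambda>A. phi p A v) As) = rep wA v"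
      proof -
        fix v
        have "sum_list (map (\<lambda>A. phi p A v) As) = (\<Sum>i\<in>{0..<m}. phi p (As ! i) v)"
          using As by (simp add: sum_list_sum_nth)
        also have "\<dots> = rep wA v" unfolding rep_def
        proof (rule sum.cong[OF refl])
          fix i assume i: "i \<in> {0..<m}"
          then have Ai: "As ! i \<in> UT_carrier (p+1) m" using As AsC nth_mem[of i As] i by auto
          show "phi p (As ! i) v = (\<Prod>k\<in>{1..p}. \<Sum>c\<in>{0..<m}. v k c * wA i k c)"
            unfolding phi_def
          proof (rule prod.cong[OF refl])
            fix k assume k: "k \<in> {1..p}"
            have ml: "multilinear_on m k (Suc k) ((As ! i) k (Suc k))"
              using carrierD(4)[OF Ai, of k "Suc k"] k by simp
            show "(As ! i) k (k + 1) v = (\<Sum>c\<in>{0..<m}. v k c * wA i k c)"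
              using entry_expand[OF ml, of v] i k by (simp add: wA_def)
          qed
        qed
        finally show "sum_list (map (\<lambda>A. phi p A v) As) = rep wA v" .
      qed
      have "fa a = (\<lambda>v. (1 / of_nat n) * rep wA v)"
      proof
        fix v
        have "of_nat n * fa a v = rep wA v" using fun_cong[OF E, of v] S by simp
        then show "fa a v = (1 / of_nat n) * rep wA v" using n0 by (simp add: field_simps)
      qed
      note eqf = this
      have "fa a \<in> R" unfolding R_def
        by (rule image_eqI[of _ _ "(1 / of_nat n, wA)"]) (simp_all add: wW eqf)
      then show False using faR by simp
    qed
  qed
  show ?thesis using P1 nontriv central expo P3 by blast
qed

end
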